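(* Suppose $(\varepsilon,\beta,\gamma;(12))\in\mathrm{Par}(n)$. Fix a positive integer $d$, and let $r$ be the number of cycles of $\beta$ of length $d$. Let $f$ be the number of fixed points of $\gamma$. If $r>0$, then: <ul> <li>(i) $f\le (r-1)d$ if $d$ is even;</li> <li>(ii) $f\le (r-1)d+1$ if $d$ is odd.</li> </ul>
   Context: A Latin square of order $n$ is an $n\times n$ array with rows, columns and symbols indexed by $[n]$, each symbol occurring once in each row and each column, with triple set $O(L)$. Permutations act on the right; $\varepsilon$ is the identity; fixed points count as cycles of length $1$. A paratopism $(\alpha,\beta,\gamma;(12))$ maps $L$ to $L^\sigma$ with triple set $\{(y\beta,x\alpha,z\gamma):(x,y,z)\in O(L)\}$; it is an autoparatopism of $L$ if $L^\sigma=L$. $\mathrm{Par}(n)$ is the set of paratopisms that are autoparatopisms of at least one Latin square of order $n$. *)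

theory Defs
  imports "HOL-Combinatorics.Permutations"
begin

definition latin_square :: "nat \<Rightarrow> (nat \<times> nat \<times> nat) set \<Rightarrow> bool" where
  "latin_square n L \<longleftrightarrow>
     L \<subseteq> {1..n} \<times> {1..n} \<times> {1..n} \<and>
     (\<forall>x\<in>{1..n}. \<forall>y\<in>{1..n}. \<exists>!z. (x, y, z) \<in> L) \<and>
     (\<forall>x\<in>{1..n}. \<forall>z\<in>{1..n}. \<exists>!y. (x, y, z) \<in> L) \<and>
     (\<forall>y\<in>{1..n}. \<forall>z\<in>{1..n}. \<exists>!x. (x, y, z) \<in> L)"

text \<open>Image of L under the paratopism (alpha, beta, gamma; (12)); permutations act on the
  right, so x alpha is written alpha x.\<close>
definition paratopism_12_image ::
  "(nat \<Rightarrow> nat) \<Rightarrow> (nat \<Rightarrow> nat) \<Rightarrow> (nat \<Rightarrow> nat) \<Rightarrow> (nat \<times> nat \<times> nat) set \<Rightarrow> (nat \<times> nat \<times> nat) set" where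
  "paratopism_12_image \<alpha> \<beta> \<gamma> L = {(\<beta> y, \<alpha> x, \<gamma> z) | x y z. (x, y, z) \<in> L}"

definition in_Par_12 :: "nat \<Rightarrow> (nat \<Rightarrow> nat) \<Rightarrow> (nat \<Rightarrow> nat) \<Rightarrow> (nat \<Rightarrow> nat) \<Rightarrow> bool" where
  "in_Par_12 n \<alpha> \<beta> \<gamma> \<longleftrightarrow>
     \<alpha> permutes {1..n} \<and> \<beta> permutes {1..n} \<and> \<gamma> permutes {1..n} \<and>
     (\<exists>L. latin_square n L \<and> paratopism_12_image \<alpha> \<beta> \<gamma> L = L)"

definition cycle_of :: "(nat \<Rightarrow> nat) \<Rightarrow> nat \<Rightarrow> nat set" where
  "cycle_of \<pi> x = {(\<pi> ^^ k) x | k. True}"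

definition num_cycles_of_length :: "nat \<Rightarrow> (nat \<Rightarrow> nat) \<Rightarrow> nat \<Rightarrow> nat" where
  "num_cycles_of_length n \<pi> d = card {cycle_of \<pi> x | x. x \<in> {1..n} \<and> card (cycle_of \<pi> x) = d}"

definition num_fixed_points :: "nat \<Rightarrow> (nat \<Rightarrow> nat) \<Rightarrow> nat" where
  "num_fixed_points n \<pi> = card {x \<in> {1..n}. \<pi> x = x}"

end

theory Submission imports Defs "HOL-Combinatorics.Orbits" begin

lemma cycle_card_eq:
  assumes "permutation f"
  shows "card (cycle_of f x) = funpow_dist1 f x x"
proof -
  have sx: "x \<in> orbit f x" by (rule permutation_self_in_orbit[OF assms])
  have "cycle_of f x = orbit f x"
    unfolding cycle_of_def orbit_altdef_permutation[OF assms] ..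
  also have "\<dots> = (\<lambda>n. (f ^^ n) x) ` {0..<funpow_dist1 f x x}"
    by (rule orbit_conv_funpow_dist1[OF sx])
  finally show ?thesis using card_image[OF inj_on_funpow_dist1[OF sx]] by simp
qed

lemma period_dvd:
  assumes "permutation f"
  shows "((f ^^ k) x = x) \<longleftrightarrow> card (cycle_of f x) dvd k"
proof -
  have sx: "x \<in> orbit f x" by (rule permutation_self_in_orbit[OF assms])
  define p where "p = funpow_dist1 f x x"
  have pc: "card (cycle_of f x) = p" using cycle_card_eq[OF assms] p_def by simp
  have pp: "(f ^^ p) x = x" using funpow_dist1_prop[OF sx] p_def by simp
  have p0: "p > 0" using p_def by simp
  have m: "(f ^^ k) x = (f ^^ (k mod p)) x" using funpow_mod_eq[OF pp, of k] by simp
  show ?thesis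
  proof
    assume "(f ^^ k) x = x"
    then have "(f ^^ (k mod p)) x = x" using m by simp
    moreover have "k mod p < p" using p0 by simp
    ultimately have "k mod p = 0" using funpow_dist1_least[of "k mod p" f x x] p_def
      by (metis gr0I)
    then show "card (cycle_of f x) dvd k" using pc by (simp add: dvd_eq_mod_eq_0)
  next
    assume "card (cycle_of f x) dvd k"
    then have "k mod p = 0" using pc by simp
    then show "(f ^^ k) x = x" using m by simp
  qed
qed


lemma latin_unique:
  assumes "latin_square n L"
  shows "(x,y,z) \<in> L \<Longrightarrow> (x',y,z) \<in> L \<Longrightarrow> x = x'"
    and "(x,y,z) \<in> L \<Longrightarrow> (x,y',z) \<in> L \<Longrightarrow> y = y'"
    and "(x,y,z) \<in> L \<Longrightarrow> (x,y,z') \<in> L \<Longrightarrow> z = z'"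
proof -
  have sub: "L \<subseteq> {1..n} \<times> {1..n} \<times> {1..n}"
   and c: "\<forall>x\<in>{1..n}. \<forall>y\<in>{1..n}. \<exists>!z. (x, y, z) \<in> L"
   and b: "\<forall>x\<in>{1..n}. \<forall>z\<in>{1..n}. \<exists>!y. (x, y, z) \<in> L"
   and a: "\<forall>y\<in>{1..n}. \<forall>z\<in>{1..n}. \<exists>!x. (x, y, z) \<in> L"
    using assms unfolding latin_square_def by auto
  show "(x,y,z) \<in> L \<Longrightarrow> (x',y,z) \<in> L \<Longrightarrow> x = x'" using a sub by blast
  show "(x,y,z) \<in> L \<Longrightarrow> (x,y',z) \<in> L \<Longrightarrow> y = y'" using b sub by blast
  show "(x,y,z) \<in> L \<Longrightarrow> (x,y,z') \<in> L \<Longrightarrow> z = z'" using c sub by blast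
qed

theorem theorem4p4:
  fixes n d :: nat and \<beta> \<gamma> :: "nat \<Rightarrow> nat"
  assumes "in_Par_12 n id \<beta> \<gamma>"
    and "d > 0"
    and "num_cycles_of_length n \<beta> d > 0"
  shows "(even d \<longrightarrow> num_fixed_points n \<gamma> \<le> (num_cycles_of_length n \<beta> d - 1) * d) \<and>
         (odd d \<longrightarrow> num_fixed_points n \<gamma> \<le> (num_cycles_of_length n \<beta> d - 1) * d + 1)"
proof -
  obtain L where bp: "\<beta> permutes {1..n}" and gp: "\<gamma> permutes {1..n}"
    and lat: "latin_square n L" and img: "paratopism_12_image id \<beta> \<gamma> L = L"
    using assms(1) unfolding in_Par_12_def by blast
  have sub: "L \<subseteq> {1..n} \<times> {1..n} \<times> {1..n}"
   and ex: "\<forall>x\<in>{1..n}. \<forall>z\<in>{1..n}. \<exists>!y. (x, y, z) \<in> L"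
    using lat unfolding latin_square_def by auto
  have perm: "permutation \<beta>" using bp permutation_permutes by blast
  have injb: "inj \<beta>" using bp permutes_inj by blast
  have R: "(\<beta> y, x, \<gamma> z) \<in> L" if "(x,y,z) \<in> L" for x y z
  proof -
    have "(\<beta> y, id x, \<gamma> z) \<in> paratopism_12_image id \<beta> \<gamma> L"
      unfolding paratopism_12_image_def using that by blast
    then show ?thesis using img by simp
  qed
  have R2: "((\<beta> ^^ k) x, (\<beta> ^^ k) y, z) \<in> L" if "(x,y,z) \<in> L" "\<gamma> z = z" for x y z k
    using that(1)
  proof (induction k)
    case 0 then show ?case by simp
  next
    case (Suc k)
    then have "(\<beta> ((\<beta> ^^ k) y), (\<beta> ^^ k) x, \<gamma> z) \<in> L" using R by blast
    then have "(\<beta> ((\<beta> ^^ k) x), \<beta> ((\<beta> ^^ k) y), \<gamma> (\<gamma> z)) \<in> L" using R by blast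
    then show ?case using that(2) by simp
  qed
  define S where "S = {cycle_of \<beta> x | x. x \<in> {1..n} \<and> card (cycle_of \<beta> x) = d}"
  define r where "r = num_cycles_of_length n \<beta> d"
  have rS: "r = card S" unfolding r_def S_def num_cycles_of_length_def by simp
  have cyc_sub: "cycle_of \<beta> x \<subseteq> {1..n}" if "x \<in> {1..n}" for x
  proof
    fix y assume "y \<in> cycle_of \<beta> x"
    then obtain k where "y = (\<beta> ^^ k) x" unfolding cycle_of_def by blast
    moreover have "(\<beta> ^^ k) x \<in> {1..n}"
    proof (induction k)
      case 0 then show ?case using that by simp
    next
      case (Suc k)
      have "\<beta> ((\<beta> ^^ k) x) \<in> {1..n}" using Suc permutes_in_image[OF bp] by blast
      then show ?case by simp
    qed
    ultimately show "y \<in> {1..n}" by simp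
  qed
  have finS: "finite S"
  proof -
    have "S \<subseteq> Pow {1..n}" unfolding S_def using cyc_sub by blast
    then show ?thesis by (rule finite_subset) simp
  qed
  have "S \<noteq> {}" using assms(3) rS r_def by auto
  then obtain x0 where x0: "x0 \<in> {1..n}" "card (cycle_of \<beta> x0) = d"
    unfolding S_def by blast
  define C where "C = cycle_of \<beta> x0"
  have CS: "C \<in> S" unfolding C_def S_def using x0 by blast
  define Z where "Z = {z \<in> {1..n}. \<gamma> z = z}"
  have fZ: "num_fixed_points n \<gamma> = card Z" unfolding Z_def num_fixed_points_def by simp
  define col where "col z = (THE y. (x0, y, z) \<in> L)" for z
  have colL: "(x0, col z, z) \<in> L" if "z \<in> Z" for z
  proof -
    have "\<exists>!y. (x0, y, z) \<in> L" using ex x0 that unfolding Z_def by blast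
    then show ?thesis unfolding col_def by (rule theI')
  qed
  have coln: "col z \<in> {1..n}" if "z \<in> Z" for z using colL[OF that] sub by blast
  have colinj: "inj_on col Z"
  proof (rule inj_onI)
    fix z1 z2 assume "z1 \<in> Z" "z2 \<in> Z" "col z1 = col z2"
    then show "z1 = z2" using colL latin_unique(3)[OF lat] by metis
  qed
  have same: "(\<beta> ^^ k) (col z) = col z \<longleftrightarrow> (\<beta> ^^ k) x0 = x0" if z: "z \<in> Z" for z k
  proof
    have fz: "\<gamma> z = z" using z unfolding Z_def by simp
    assume h: "(\<beta> ^^ k) (col z) = col z"
    have "((\<beta> ^^ k) x0, (\<beta> ^^ k) (col z), z) \<in> L" by (rule R2[OF colL[OF z] fz])
    then have "((\<beta> ^^ k) x0, col z, z) \<in> L" using h by simp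
    then show "(\<beta> ^^ k) x0 = x0" using colL[OF z] latin_unique(1)[OF lat] by blast
  next
    have fz: "\<gamma> z = z" using z unfolding Z_def by simp
    assume h: "(\<beta> ^^ k) x0 = x0"
    have a: "(\<beta> (col z), x0, z) \<in> L" using R[OF colL[OF z]] fz by simp
    have "((\<beta> ^^ k) (\<beta> (col z)), (\<beta> ^^ k) x0, z) \<in> L" by (rule R2[OF a fz])
    then have "(\<beta> ((\<beta> ^^ k) (col z)), x0, z) \<in> L" using h by (simp add: funpow_swap1)
    then have "\<beta> ((\<beta> ^^ k) (col z)) = \<beta> (col z)" using a latin_unique(1)[OF lat] by blast
    then show "(\<beta> ^^ k) (col z) = col z" using injb by (simp add: inj_eq)
  qed
  have colcard: "card (cycle_of \<beta> (col z)) = d" if z: "z \<in> Z" for z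
  proof -
    have "card (cycle_of \<beta> (col z)) dvd k \<longleftrightarrow> d dvd k" for k
      using same[OF z, of k] period_dvd[OF perm] x0(2) by metis
    then show ?thesis by (meson dvd_antisym dvd_refl)
  qed
  have colS: "cycle_of \<beta> (col z) \<in> S" if z: "z \<in> Z" for z
    unfolding S_def using coln[OF z] colcard[OF z] by blast
  have colself: "col z \<in> cycle_of \<beta> (col z)" for z
    unfolding cycle_of_def by (rule CollectI, rule exI[of _ 0]) simp
  have inC: "d dvd 2 * j + 1" if z: "z \<in> Z" and cj: "col z = (\<beta> ^^ j) x0" for z j
  proof -
    have fz: "\<gamma> z = z" using z unfolding Z_def by simp
    have a: "(x0, (\<beta> ^^ j) x0, z) \<in> L" using colL[OF z] cj by simp
    have b: "(\<beta> ((\<beta> ^^ j) x0), x0, z) \<in> L" using R[OF a] fz by simp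
    have "((\<beta> ^^ j) (\<beta> ((\<beta> ^^ j) x0)), (\<beta> ^^ j) x0, z) \<in> L" by (rule R2[OF b fz])
    moreover have "(\<beta> ^^ j) (\<beta> ((\<beta> ^^ j) x0)) = (\<beta> ^^ (2 * j + 1)) x0"
    proof -
      have "(\<beta> ^^ (2 * j + 1)) x0 = (\<beta> ^^ j) ((\<beta> ^^ (Suc j)) x0)"
      proof -
        have "2 * j + 1 = j + Suc j" by simp
        then show ?thesis by (simp only: funpow_add o_apply)
      qed
      then show ?thesis by simp
    qed
    ultimately have "((\<beta> ^^ (2 * j + 1)) x0, (\<beta> ^^ j) x0, z) \<in> L" by simp
    then have "(\<beta> ^^ (2 * j + 1)) x0 = x0" using a latin_unique(1)[OF lat] by blast
    then show ?thesis using period_dvd[OF perm] x0(2) by metis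
  qed
  define U where "U = \<Union> (S - {C})"
  have cardU: "card U \<le> (r - 1) * d"
  proof -
    have "card U \<le> (\<Sum>A\<in>S - {C}. card A)" unfolding U_def by (rule card_Union_le_sum_card)
    also have "\<dots> = (\<Sum>A\<in>S - {C}. d)"
      by (rule sum.cong) (auto simp: S_def)
    also have "\<dots> = (r - 1) * d" using finS CS rS by simp
    finally show ?thesis .
  qed
  have finU: "finite U"
  proof -
    have "U \<subseteq> {1..n}" unfolding U_def S_def using cyc_sub by blast
    then show ?thesis by (rule finite_subset) simp
  qed
  have split: "col z \<in> U \<or> col z \<in> C" if z: "z \<in> Z" for z
  proof (cases "cycle_of \<beta> (col z) = C")
    case True then show ?thesis using colself by auto
  next
    case False then show ?thesis unfolding U_def using colS[OF z] colself by blast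
  qed
  have inCj: "\<exists>j. col z = (\<beta> ^^ j) x0" if "col z \<in> C" for z
    using that unfolding C_def cycle_of_def by blast
  have finZ: "finite Z" unfolding Z_def by simp
  have cZ: "card Z = card (col ` Z)" using card_image[OF colinj] by simp
  show ?thesis
  proof (intro conjI impI)
    assume ev: "even d"
    have "col ` Z \<subseteq> U"
    proof
      fix y assume "y \<in> col ` Z"
      then obtain z where z: "z \<in> Z" "y = col z" by blast
      have "col z \<notin> C"
      proof
        assume "col z \<in> C"
        then obtain j where "col z = (\<beta> ^^ j) x0" using inCj by blast
        then have "d dvd 2 * j + 1" using inC z by blast
        then show False using ev by (metis dvd_trans even_mult_iff odd_one dvd_add_right_iff dvd_triv_left)
      qed
      then show "y \<in> U" using split z by blast
    qed
    then have "card (col ` Z) \<le> card U" using finU card_mono by blast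
    then show "num_fixed_points n \<gamma> \<le> (num_cycles_of_length n \<beta> d - 1) * d"
      using cardU cZ fZ r_def by simp
  next
    assume od: "odd d"
    have fin1: "finite (col ` Z \<inter> C)" using finZ by simp
    have all: "\<forall>a\<in>col ` Z \<inter> C. \<forall>b\<in>col ` Z \<inter> C. a = b"
      proof (intro ballI)
        fix a b assume a: "a \<in> col ` Z \<inter> C" and b: "b \<in> col ` Z \<inter> C"
        obtain z1 where z1: "z1 \<in> Z" "a = col z1" using a by blast
        obtain z2 where z2: "z2 \<in> Z" "b = col z2" using b by blast
        obtain j1 where j1: "col z1 = (\<beta> ^^ j1) x0" using inCj[of z1] a z1 by auto
        obtain j2 where j2: "col z2 = (\<beta> ^^ j2) x0" using inCj[of z2] b z2 by auto
        have d1: "d dvd 2 * j1 + 1" using inC z1 j1 by blast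
        have d2: "d dvd 2 * j2 + 1" using inC z2 j2 by blast
        have cop: "coprime d 2" using od by (simp add: coprime_commute)
        have key: "(\<beta> ^^ i) x0 = (\<beta> ^^ k) x0" if "d dvd 2 * i + 1" "d dvd 2 * k + 1" "k \<le> i" for i k
        proof -
          have "d dvd (2 * i + 1) - (2 * k + 1)" using that dvd_diff_nat by blast
          then have "d dvd 2 * (i - k)" by (simp add: right_diff_distrib')
          then have "d dvd (i - k)" using cop coprime_dvd_mult_right_iff by blast
          then have "(\<beta> ^^ (i - k)) x0 = x0" using period_dvd[OF perm] x0(2) by metis
          then have "(\<beta> ^^ k) ((\<beta> ^^ (i - k)) x0) = (\<beta> ^^ k) x0" by simp
          moreover have "i = k + (i - k)" using that(3) by simp
          ultimately show ?thesis by (metis funpow_add o_apply)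
        qed
        show "a = b"
        proof (cases "j2 \<le> j1")
          case True then show ?thesis using key[OF d1 d2] z1 z2 j1 j2 by simp
        next
          case False then show ?thesis using key[OF d2 d1] z1 z2 j1 j2 by simp
        qed
      qed
    have one: "card (col ` Z \<inter> C) \<le> 1" using card_le_Suc0_iff_eq[OF fin1] all by simp
    have "col ` Z \<subseteq> U \<union> (col ` Z \<inter> C)" using split by blast
    then have "card (col ` Z) \<le> card (U \<union> (col ` Z \<inter> C))" using finU finZ
      by (intro card_mono) auto
    also have "\<dots> \<le> card U + card (col ` Z \<inter> C)" by (rule card_Un_le)
    finally show "num_fixed_points n \<gamma> \<le> (num_cycles_of_length n \<beta> d - 1) * d + 1"
      using one cardU cZ fZ r_def by simp
  qed
qed

end
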